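(* Let $R>0$, $L>0$, and let $f$ be convex and $L$-Lipschitz on an open convex neighborhood of $B:=\{u\in\mathbb{R}^k:\|u\|_2\le R\}$. Let $h=\frac{1}{2L}$ and let $\{u^{(1)},\dots,u^{(m)}\}\subseteq B$ be an $h$-net of $B$ (every $u\in B$ has some $i$ with $\|u-u^{(i)}\|_2\le h$). For each $i$ pick $g_i\in\partial f(u^{(i)})$ and define $\ell_i(u):=f(u^{(i)})+\langle g_i,u-u^{(i)}\rangle$, and define $$G(u):=1+\log\Big(\sum_{i=1}^m\exp(\ell_i(u))\Big).$$ Then for all $u\in B$, $$f(u)\le G(u)\le f(u)+1+\log m.$$ Moreover, such an $h$-net can be chosen with $m\le(1+4LR)^k$.
   Context: $\partial f(u)$ denotes the subdifferential of the convex function $f$ at $u$. *)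

theory Defs
  imports "HOL-Analysis.Analysis"
begin

definition subdifferential :: "('a::real_inner \<Rightarrow> real) \<Rightarrow> 'a set \<Rightarrow> 'a \<Rightarrow> 'a set" where
  "subdifferential f U x = {g. \<forall>y\<in>U. f x + inner g (y - x) \<le> f y}"

definition is_net :: "real \<Rightarrow> 'a::real_normed_vector set \<Rightarrow> nat \<Rightarrow> (nat \<Rightarrow> 'a) \<Rightarrow> bool" where
  "is_net h B m pts \<longleftrightarrow> (\<forall>i<m. pts i \<in> B) \<and> (\<forall>v\<in>B. \<exists>i<m. norm (v - pts i) \<le> h)"

end

theory Submission
  imports Defs
begin

lemma packing:
  fixes S :: "'a::euclidean_space set"
  assumes fin: "finite S" and sub: "S \<subseteq> cball 0 R"
    and sep: "\<forall>p\<in>S. \<forall>q\<in>S. p \<noteq> q \<longrightarrow> dist p q > h" and h: "h > 0" and R: "R \<ge> 0"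
  shows "real (card S) \<le> ((R + h/2)/(h/2)) ^ DIM('a)"
proof -
  define c where "c = unit_ball_vol (real DIM('a))"
  have c: "c > 0" unfolding c_def by simp
  have disj: "disjoint_family_on (\<lambda>p. ball p (h/2)) S"
    unfolding disjoint_family_on_def
  proof (intro ballI impI)
    fix p q assume pq: "p \<in> S" "q \<in> S" "p \<noteq> q"
    show "ball p (h/2) \<inter> ball q (h/2) = {}"
    proof (rule ccontr)
      assume "ball p (h/2) \<inter> ball q (h/2) \<noteq> {}"
      then obtain x where "dist p x < h/2" "dist q x < h/2" by auto
      then have "dist p q < h" using dist_triangle[of p q x] by (simp add: dist_commute)
      with sep pq show False by force
    qed
  qed
  have "measure lborel (\<Union>p\<in>S. ball p (h/2)) = (\<Sum>p\<in>S. measure lborel (ball p (h/2)))"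
    using h by (intro measure_finite_Union[OF fin _ disj]) (auto simp: emeasure_ball)
  also have "\<dots> = real (card S) * (c * (h/2) ^ DIM('a))"
    using h R by (simp add: content_ball c_def)
  finally have eq: "measure lborel (\<Union>p\<in>S. ball p (h/2)) = real (card S) * (c * (h/2) ^ DIM('a))" .
  have "(\<Union>p\<in>S. ball p (h/2)) \<subseteq> ball 0 (R + h/2)"
  proof
    fix x assume "x \<in> (\<Union>p\<in>S. ball p (h/2))"
    then obtain p where "p \<in> S" "dist p x < h/2" by auto
    moreover have "norm p \<le> R" using sub \<open>p \<in> S\<close> by auto
    moreover have "norm x \<le> norm p + dist p x"
      using norm_triangle_ineq[of p "x - p"] by (simp add: dist_norm norm_minus_commute)
    ultimately show "x \<in> ball 0 (R + h/2)"
      by simp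
  qed
  moreover have "ball 0 (R + h/2) \<in> fmeasurable lborel"
    using h R by (simp add: fmeasurable_def emeasure_ball)
  ultimately have "measure lborel (\<Union>p\<in>S. ball p (h/2)) \<le> measure lborel (ball (0::'a) (R + h/2))"
    by (intro measure_mono_fmeasurable) (auto intro!: borel_open)
  also have "\<dots> = c * (R + h/2) ^ DIM('a)" using h R by (simp add: content_ball c_def)
  finally have "real (card S) * (c * (h/2) ^ DIM('a)) \<le> c * (R + h/2) ^ DIM('a)" using eq by simp
  then have "c * (real (card S) * (h/2) ^ DIM('a)) \<le> c * (R + h/2) ^ DIM('a)"
    by (simp only: mult.left_commute)
  then have le: "real (card S) * (h/2) ^ DIM('a) \<le> (R + h/2) ^ DIM('a)"
    using c by (rule mult_left_le_imp_le)
  have pos: "(h/2) ^ DIM('a) > 0" using h by simp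
  show ?thesis by (subst power_divide, subst pos_le_divide_eq[OF pos], rule le)
qed

lemma subgrad_norm:
  fixes f :: "'a::real_inner \<Rightarrow> real"
  assumes U: "open U" and lip: "L-lipschitz_on U f" and x: "x \<in> U"
    and g: "g \<in> subdifferential f U x"
  shows "norm g \<le> L"
proof (cases "g = 0")
  case True then show ?thesis using lip by (simp add: lipschitz_on_def)
next
  case False
  obtain e where e: "e > 0" "ball x e \<subseteq> U" using U x open_contains_ball by blast
  define t where "t = e / 2"
  have t: "t > 0" "t < e" using e by (auto simp: t_def)
  define y where "y = x + (t / norm g) *\<^sub>R g"
  have ng: "norm g > 0" using False by simp
  have dyx: "dist y x = t" using ng t by (simp add: y_def dist_norm)
  have "y \<in> U" using e t dyx by (auto simp: dist_commute)
  then have "f x + inner g (y - x) \<le> f y" using g by (auto simp: subdifferential_def)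
  moreover have "inner g (y - x) = t * norm g"
    using ng by (simp add: y_def inner_commute power2_norm_eq_inner[symmetric] power2_eq_square)
  moreover have "f y - f x \<le> L * t"
    using lipschitz_onD[OF lip \<open>y \<in> U\<close> x] dyx by (simp add: dist_real_def)
  ultimately have "t * norm g \<le> t * L" by (simp add: mult.commute)
  then show ?thesis using t by simp
qed

theorem lemma3p2:
  fixes f :: "'a::euclidean_space \<Rightarrow> real" and R L :: real and U :: "'a set"
  assumes "R > 0" and "L > 0"
    and "open U" and "convex U" and "cball 0 R \<subseteq> U"
    and "convex_on U f" and "L-lipschitz_on U f"
  shows "(\<forall>m pts g. is_net (1 / (2 * L)) (cball 0 R) m pts
            \<and> (\<forall>i<m. g i \<in> subdifferential f U (pts i)) \<longrightarrow>
            (\<forall>v\<in>cball 0 R.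
               f v \<le> 1 + ln (\<Sum>i<m. exp (f (pts i) + inner (g i) (v - pts i)))
             \<and> 1 + ln (\<Sum>i<m. exp (f (pts i) + inner (g i) (v - pts i))) \<le> f v + 1 + ln (real m)))
       \<and> (\<exists>m (pts :: nat \<Rightarrow> 'a). is_net (1 / (2 * L)) (cball 0 R) m pts
            \<and> real m \<le> (1 + 4 * L * R) ^ DIM('a))"
proof (intro conjI allI impI ballI)
  note R = \<open>R > 0\<close> and L = \<open>L > 0\<close> and U = \<open>open U\<close> and BU = \<open>cball 0 R \<subseteq> U\<close>
    and lip = \<open>L-lipschitz_on U f\<close>
  define h where "h = 1 / (2 * L)"
  have h: "h > 0" "L * h = 1/2" using L by (auto simp: h_def)
  {
    fix m pts g v
    assume A: "is_net (1 / (2 * L)) (cball 0 R) m pts \<and> (\<forall>i<m. g i \<in> subdifferential f U (pts i))"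
      and v: "v \<in> cball (0::'a) R"
    define l where "l i = f (pts i) + inner (g i) (v - pts i)" for i
    have net: "\<forall>i<m. pts i \<in> cball 0 R" "\<forall>w\<in>cball 0 R. \<exists>i<m. norm (w - pts i) \<le> h"
      using A by (auto simp: is_net_def h_def)
    have sg: "\<And>i. i < m \<Longrightarrow> g i \<in> subdifferential f U (pts i)" using A by auto
    have vU: "v \<in> U" using v BU by auto
    have lle: "l i \<le> f v" if "i < m" for i
      using sg[OF that] vU by (auto simp: subdifferential_def l_def)
    obtain j where j: "j < m" "norm (v - pts j) \<le> h" using net(2) v by blast
    have pjU: "pts j \<in> U" using net(1) j BU by auto
    have gj: "norm (g j) \<le> L" by (rule subgrad_norm[OF U lip pjU sg[OF j(1)]])
    have "\<bar>inner (g j) (v - pts j)\<bar> \<le> norm (g j) * norm (v - pts j)" by (rule Cauchy_Schwarz_ineq2)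
    also have "\<dots> \<le> L * h" using gj j(2) L by (intro mult_mono) auto
    finally have i1: "inner (g j) (v - pts j) \<ge> - 1/2" using h by linarith
    have "f v - f (pts j) \<le> L * dist v (pts j)"
      using lipschitz_onD[OF lip vU pjU] by (simp add: dist_real_def)
    also have "\<dots> \<le> L * h" using j(2) L by (intro mult_left_mono) (auto simp: dist_norm)
    finally have "f v - 1 \<le> l j" using i1 h by (simp add: l_def)
    have pos: "(\<Sum>i<m. exp (l i)) > 0" using j by (intro sum_pos2[of _ j]) auto
    have "exp (l j) \<le> (\<Sum>i<m. exp (l i))" using j by (intro member_le_sum) auto
    then have "l j \<le> ln (\<Sum>i<m. exp (l i))" using pos by (simp add: ln_ge_iff)
    with \<open>f v - 1 \<le> l j\<close> show "f v \<le> 1 + ln (\<Sum>i<m. exp (f (pts i) + inner (g i) (v - pts i)))"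
      by (simp add: l_def)
    have "(\<Sum>i<m. exp (l i)) \<le> (\<Sum>i<m. exp (f v))" using lle by (intro sum_mono) auto
    also have "\<dots> = real m * exp (f v)" by simp
    finally have "ln (\<Sum>i<m. exp (l i)) \<le> ln (real m * exp (f v))" using pos by simp
    also have "\<dots> = ln (real m) + f v" using j by (simp add: ln_mult)
    finally show "1 + ln (\<Sum>i<m. exp (f (pts i) + inner (g i) (v - pts i))) \<le> f v + 1 + ln (real m)"
      by (simp add: l_def)
  }
  define sep where "sep S \<longleftrightarrow> (\<forall>p\<in>S. \<forall>q\<in>S. p \<noteq> q \<longrightarrow> dist p q > h)" for S :: "'a set"
  define N where "N = nat \<lfloor>(1 + 4 * L * R) ^ DIM('a)\<rfloor>"
  have ratio: "(R + h/2)/(h/2) = 1 + 4 * L * R" using L by (simp add: h_def field_simps)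
  define C where "C = card ` {S. finite S \<and> S \<subseteq> cball (0::'a) R \<and> sep S}"
  have Cb: "C \<subseteq> {..N}"
  proof
    fix n assume "n \<in> C"
    then obtain S where S: "finite S" "S \<subseteq> cball (0::'a) R" "sep S" "n = card S" by (auto simp: C_def)
    have "real (card S) \<le> (1 + 4 * L * R) ^ DIM('a)"
      using packing[OF S(1,2) _ h(1)] S(3) R ratio by (auto simp: sep_def)
    then show "n \<in> {..N}" using S(4) by (simp add: N_def le_nat_floor)
  qed
  have Cne: "0 \<in> C" unfolding C_def by (rule image_eqI[of _ _ "{}"]) (auto simp: sep_def)
  have Cfin: "finite C" using Cb finite_subset by blast
  have "Max C \<in> C" using Cfin Cne by (intro Max_in) auto
  then obtain S where S: "finite S" "S \<subseteq> cball (0::'a) R" "sep S" "card S = Max C"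
    by (auto simp: C_def)
  have cover: "\<exists>p\<in>S. norm (w - p) \<le> h" if w: "w \<in> cball 0 R" for w
  proof (rule ccontr)
    assume "\<not> ?thesis"
    then have far: "\<forall>p\<in>S. dist w p > h" by (auto simp: dist_norm)
    have wS: "w \<notin> S" using far h by fastforce
    have "sep (insert w S)" using S(3) far by (auto simp: sep_def dist_commute)
    then have "card (insert w S) \<in> C" using S w unfolding C_def by auto
    then have "card (insert w S) \<le> Max C" using Cfin by simp
    then show False using S(1,4) wS by simp
  qed
  obtain b where b: "bij_betw b {0..<card S} S" using ex_bij_betw_nat_finite[OF S(1)] by blast
  have "is_net h (cball 0 R) (card S) b"
    unfolding is_net_def
  proof (intro conjI allI impI ballI)
    fix i assume "i < card S" then show "b i \<in> cball 0 R" using b S(2) bij_betwE by fastforce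
  next
    fix w :: 'a assume "w \<in> cball 0 R"
    then obtain p where p: "p \<in> S" "norm (w - p) \<le> h" using cover by blast
    then obtain i where "i \<in> {0..<card S}" "b i = p" using b by (metis bij_betw_iff_bijections)
    then show "\<exists>i<card S. norm (w - b i) \<le> h" using p by auto
  qed
  moreover have "real (card S) \<le> (1 + 4 * L * R) ^ DIM('a)"
    using packing[OF S(1,2) _ h(1)] S(3) R ratio by (auto simp: sep_def)
  ultimately show "\<exists>m (pts :: nat \<Rightarrow> 'a). is_net (1 / (2 * L)) (cball 0 R) m pts
            \<and> real m \<le> (1 + 4 * L * R) ^ DIM('a)" unfolding h_def by blast
qed

end
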